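(* For any Bessel sequence $\{x_k\}_{k=1}^\infty$ in the real or complex space $\ell_2$, the family $\{\tilde{x}_k\}_{k=1}^\infty$ is a Bessel sequence in $\tilde{\mathbb{H}}$. However, $\{\tilde{x}_k\}_{k=1}^\infty$ is not a frame for $\tilde{\mathbb{H}}$.
   Context: A sequence $\{y_k\}$ in a Hilbert space $K$ is Bessel if there is $B<\infty$ with $\sum_k|\langle y,y_k\rangle|^2\le B\|y\|^2$ for all $y\in K$; it is a frame if additionally there is $A>0$ with $A\|y\|^2\le\sum_k|\langle y,y_k\rangle|^2$. Let $\tilde{\mathbb{H}}=\left(\sum_{i=1}^\infty\oplus\ell_2\right)_{\ell_2}$ be the $\ell_2$-direct sum of countably many copies of real $\ell_2$, with inner product $\langle(\vec{x}_i),(\vec{y}_i)\rangle=\sum_i\langle\vec{x}_i,\vec{y}_i\rangle$. For $x=(x_i)\in\ell_2$, $\tilde{x}=(\vec{x}_1,\vec{x}_2,\dots)\in\tilde{\mathbb{H}}$ where, in the real case, $\vec{x}_n=(x_nx_n,x_nx_{n+1},x_nx_{n+2},\dots)$, and in the complex case, $\vec{x}_n=(|x_n|^2,\mathrm{Re}(\bar{x}_nx_{n+1}),\mathrm{Im}(\bar{x}_nx_{n+1}),\mathrm{Re}(\bar{x}_nx_{n+2}),\mathrm{Im}(\bar{x}_nx_{n+2}),\dots)$. *)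

theory Defs
  imports "HOL-Analysis.Analysis"
begin

text \<open>Abstract Bessel sequences and frames in a (pre-)Hilbert space given by a carrier set S
  and an inner product ip (with values in reals or complexes); the squared norm of v is
  norm (ip v v). Sequences are indexed by nat (starting at 0 instead of 1).\<close>

definition bessel_seq :: "'a set \<Rightarrow> ('a \<Rightarrow> 'a \<Rightarrow> 'b::real_normed_vector) \<Rightarrow> (nat \<Rightarrow> 'a) \<Rightarrow> bool" where
  "bessel_seq S ip y \<longleftrightarrow> (\<forall>k. y k \<in> S) \<and>
     (\<exists>B::real. \<forall>v\<in>S. summable (\<lambda>k. (norm (ip v (y k)))\<^sup>2) \<and>
                     (\<Sum>k. (norm (ip v (y k)))\<^sup>2) \<le> B * norm (ip v v))"

definition frame_seq :: "'a set \<Rightarrow> ('a \<Rightarrow> 'a \<Rightarrow> 'b::real_normed_vector) \<Rightarrow> (nat \<Rightarrow> 'a) \<Rightarrow> bool" where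
  "frame_seq S ip y \<longleftrightarrow> bessel_seq S ip y \<and>
     (\<exists>A::real. A > 0 \<and> (\<forall>v\<in>S. A * norm (ip v v) \<le> (\<Sum>k. (norm (ip v (y k)))\<^sup>2)))"

definition l2_real :: "(nat \<Rightarrow> real) set" where
  "l2_real = {x. summable (\<lambda>i. (x i)\<^sup>2)}"

definition ip_real :: "(nat \<Rightarrow> real) \<Rightarrow> (nat \<Rightarrow> real) \<Rightarrow> real" where
  "ip_real x y = (\<Sum>i. x i * y i)"

definition l2_cplx :: "(nat \<Rightarrow> complex) set" where
  "l2_cplx = {x. summable (\<lambda>i. (norm (x i))\<^sup>2)}"

definition ip_cplx :: "(nat \<Rightarrow> complex) \<Rightarrow> (nat \<Rightarrow> complex) \<Rightarrow> complex" where
  "ip_cplx x y = (\<Sum>i. x i * cnj (y i))"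

text \<open>The l2-direct sum of countably many copies of real l2: z i is the i-th component.\<close>

definition Htilde :: "(nat \<Rightarrow> nat \<Rightarrow> real) set" where
  "Htilde = {z. (\<forall>i. z i \<in> l2_real) \<and> summable (\<lambda>i. ip_real (z i) (z i))}"

definition ip_H :: "(nat \<Rightarrow> nat \<Rightarrow> real) \<Rightarrow> (nat \<Rightarrow> nat \<Rightarrow> real) \<Rightarrow> real" where
  "ip_H z w = (\<Sum>i. ip_real (z i) (w i))"

definition tilde_real :: "(nat \<Rightarrow> real) \<Rightarrow> nat \<Rightarrow> nat \<Rightarrow> real" where
  "tilde_real x = (\<lambda>n j. x n * x (n + j))"

definition tilde_cplx :: "(nat \<Rightarrow> complex) \<Rightarrow> nat \<Rightarrow> nat \<Rightarrow> real" where
  "tilde_cplx x = (\<lambda>n j. if j = 0 then (norm (x n))\<^sup>2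
      else if odd j then Re (cnj (x n) * x (n + (j + 1) div 2))
      else Im (cnj (x n) * x (n + j div 2)))"

end

theory Submission
  imports Defs
begin

lemma cs_series:
  fixes f :: "nat \<Rightarrow> 'a::banach" and a c :: "nat \<Rightarrow> real"
  assumes fac: "\<And>n. norm (f n) \<le> a n * c n" and a0: "\<And>n. 0 \<le> a n" and c0: "\<And>n. 0 \<le> c n"
    and sa: "summable (\<lambda>n. (a n)\<^sup>2)" and sc: "summable (\<lambda>n. (c n)\<^sup>2)"
  shows "summable f \<and> (norm (suminf f))\<^sup>2 \<le> (\<Sum>n. (a n)\<^sup>2) * (\<Sum>n. (c n)\<^sup>2)"
proof -
  have amgm: "a n * c n \<le> ((a n)\<^sup>2 + (c n)\<^sup>2) / 2" for n
    using sum_squares_bound[of "a n" "c n"] by (simp add: field_simps)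
  have sac: "summable (\<lambda>n. a n * c n)"
    apply (rule summable_comparison_test'[of "\<lambda>n. ((a n)\<^sup>2 + (c n)\<^sup>2) / 2"])
    using sa sc amgm a0 c0 by (auto intro!: summable_add summable_divide)
  have sn: "summable (\<lambda>n. norm (f n))"
    apply (rule summable_comparison_test'[OF sac]) using fac by auto
  have sf: "summable f" using sn summable_norm_cancel by blast
  have le1: "norm (suminf f) \<le> (\<Sum>n. a n * c n)"
    using summable_norm[OF sn] suminf_le[OF fac sn sac] by linarith
  define P where "P = (\<Sum>n. (a n)\<^sup>2) * (\<Sum>n. (c n)\<^sup>2)"
  have P0: "0 \<le> P" unfolding P_def using sa sc by (auto intro!: mult_nonneg_nonneg suminf_nonneg)
  have le2: "(\<Sum>n. a n * c n) \<le> sqrt P"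
  proof (rule suminf_le_const[OF sac])
    fix N
    have "(\<Sum>i<N. a i * c i)\<^sup>2 \<le> (\<Sum>i<N. (a i)\<^sup>2) * (\<Sum>i<N. (c i)\<^sup>2)"
      by (rule Cauchy_Schwarz_ineq_sum)
    also have "\<dots> \<le> P" unfolding P_def
      using sa sc by (intro mult_mono sum_le_suminf) (auto intro!: suminf_nonneg sum_nonneg)
    finally have "(\<Sum>i<N. a i * c i)\<^sup>2 \<le> P" .
    then show "(\<Sum>i<N. a i * c i) \<le> sqrt P"
      using real_le_rsqrt by blast
  qed
  have "norm (suminf f) \<le> sqrt P" using le1 le2 by linarith
  then have "(norm (suminf f))\<^sup>2 \<le> (sqrt P)\<^sup>2" by (intro power_mono) auto
  then show ?thesis using sf P0 by (simp add: P_def)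
qed

lemma shift_sums:
  fixes g :: "nat \<Rightarrow> 'a::real_normed_vector"
  assumes "(\<lambda>j. g (n + j)) sums s"
  shows "(\<lambda>i. if n \<le> i then g i else 0) sums s"
proof -
  let ?F = "\<lambda>i. if n \<le> i then g i else 0"
  have "(\<lambda>i. ?F (i + n)) = (\<lambda>j. g (n + j))" by (auto simp: add.commute)
  then have "(\<lambda>i. ?F (i + n)) sums s" using assms by simp
  then have "?F sums (s + (\<Sum>i<n. ?F i))" using sums_iff_shift[of ?F n s] by blast
  moreover have "(\<Sum>i<n. ?F i) = 0" by (intro sum.neutral) auto
  ultimately show ?thesis by simp
qed

lemma double_bound:
  fixes c :: "nat \<Rightarrow> nat \<Rightarrow> real" and s :: "nat \<Rightarrow> real"
  assumes rows: "\<And>k. summable (\<lambda>n. (c k n)\<^sup>2)"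
    and cols: "\<And>n. summable (\<lambda>k. (c k n)\<^sup>2) \<and> (\<Sum>k. (c k n)\<^sup>2) \<le> s n"
    and ss: "summable s"
  shows "summable (\<lambda>k. \<Sum>n. (c k n)\<^sup>2) \<and> (\<Sum>k. \<Sum>n. (c k n)\<^sup>2) \<le> (\<Sum>n. s n)"
proof -
  have s0: "0 \<le> s n" for n using cols[of n] suminf_nonneg[of "\<lambda>k. (c k n)\<^sup>2"] by force
  have scol: "summable (\<lambda>n. \<Sum>k. (c k n)\<^sup>2)"
    apply (rule summable_comparison_test'[OF ss])
    subgoal for n using cols[of n] suminf_nonneg[of "\<lambda>k. (c k n)\<^sup>2"] by auto
    done
  have part: "(\<Sum>k<K. \<Sum>n. (c k n)\<^sup>2) \<le> (\<Sum>n. s n)" for K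
  proof -
    have "(\<Sum>k<K. \<Sum>n. (c k n)\<^sup>2) = (\<Sum>n. \<Sum>k<K. (c k n)\<^sup>2)"
      using rows by (subst suminf_sum) auto
    also have "\<dots> \<le> (\<Sum>n. \<Sum>k. (c k n)\<^sup>2)"
      apply (rule suminf_le)
      using cols rows scol by (auto intro!: sum_le_suminf summable_sum)
    also have "\<dots> \<le> (\<Sum>n. s n)"
      apply (rule suminf_le) using cols scol ss by auto
    finally show ?thesis .
  qed
  have sm: "summable (\<lambda>k. \<Sum>n. (c k n)\<^sup>2)"
    apply (rule summableI_nonneg_bounded[where x="\<Sum>n. s n"])
    using rows part by (auto intro!: suminf_nonneg)
  show ?thesis using sm part by (auto intro!: suminf_le_const)
qed

lemma combine:
  fixes t N g :: "nat \<Rightarrow> real"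
  assumes tg: "\<And>k. (t k)\<^sup>2 \<le> N k * g k" and N0: "\<And>k. 0 \<le> N k" and NB: "\<And>k. N k \<le> B1"
    and g0: "\<And>k. 0 \<le> g k" and sg: "summable g"
  shows "summable (\<lambda>k. (t k)\<^sup>2) \<and> (\<Sum>k. (t k)\<^sup>2) \<le> B1 * (\<Sum>k. g k)"
proof -
  have le: "(t k)\<^sup>2 \<le> B1 * g k" for k
    using tg[of k] mult_right_mono[OF NB[of k] g0[of k]] by linarith
  have sB: "summable (\<lambda>k. B1 * g k)" using sg by (rule summable_mult)
  have st: "summable (\<lambda>k. (t k)\<^sup>2)"
    by (rule summable_comparison_test'[OF sB]) (use le in auto)
  have "(\<Sum>k. (t k)\<^sup>2) \<le> (\<Sum>k. B1 * g k)" by (rule suminf_le[OF le st sB])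
  also have "\<dots> = B1 * (\<Sum>k. g k)" using sg by (rule suminf_mult)
  finally show ?thesis using st by blast
qed

lemma nonframe:
  fixes T h :: "nat \<Rightarrow> nat \<Rightarrow> real" and p :: "nat \<Rightarrow> real"
  assumes Tph: "\<And>k j. (T k j)\<^sup>2 \<le> p k * h k j" and p0: "\<And>k. 0 \<le> p k" and sp: "summable p"
    and h0: "\<And>k j. 0 \<le> h k j" and hC: "\<And>k J. (\<Sum>j<J. h k j) \<le> C"
    and sT: "\<And>j. summable (\<lambda>k. (T k j)\<^sup>2)"
    and A: "\<And>j. A \<le> (\<Sum>k. (T k j)\<^sup>2)" and Apos: "A > 0"
  shows False
proof -
  have bound: "real J * A \<le> C * (\<Sum>k. p k)" for J
  proof -
    have "real J * A = (\<Sum>j<J. A)" by simp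
    also have "\<dots> \<le> (\<Sum>j<J. \<Sum>k. (T k j)\<^sup>2)" by (intro sum_mono A)
    also have "\<dots> = (\<Sum>k. \<Sum>j<J. (T k j)\<^sup>2)" using sT by (subst suminf_sum) auto
    also have "\<dots> \<le> (\<Sum>k. p k * C)"
    proof (rule suminf_le)
      fix k
      have "(\<Sum>j<J. (T k j)\<^sup>2) \<le> (\<Sum>j<J. p k * h k j)" by (intro sum_mono Tph)
      also have "\<dots> = p k * (\<Sum>j<J. h k j)" by (simp add: sum_distrib_left)
      also have "\<dots> \<le> p k * C" using hC p0 by (intro mult_left_mono) auto
      finally show "(\<Sum>j<J. (T k j)\<^sup>2) \<le> p k * C" .
    next
      show "summable (\<lambda>k. \<Sum>j<J. (T k j)\<^sup>2)" using sT by (intro summable_sum) auto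
      show "summable (\<lambda>k. p k * C)" using sp by (rule summable_mult2)
    qed
    also have "\<dots> = C * (\<Sum>k. p k)" using suminf_mult2[OF sp, of C] by (simp add: mult.commute)
    finally show ?thesis .
  qed
  obtain J :: nat where "C * (\<Sum>k. p k) < real J * A"
    using Apos reals_Archimedean3 by blast
  with bound[of J] show False by linarith
qed

lemma l2r_ip: "v \<in> l2_real \<Longrightarrow> ip_real v v = (\<Sum>i. (v i)\<^sup>2) \<and> 0 \<le> ip_real v v \<and> summable (\<lambda>i. (v i)\<^sup>2)"
  unfolding l2_real_def ip_real_def by (auto simp: power2_eq_square intro!: suminf_nonneg)

lemma l2r_prod:
  assumes "u \<in> l2_real" "w \<in> l2_real"
  shows "summable (\<lambda>i. u i * w i) \<and> (ip_real u w)\<^sup>2 \<le> ip_real u u * ip_real w w"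
proof -
  have "summable (\<lambda>i. u i * w i) \<and> (norm (\<Sum>i. u i * w i))\<^sup>2 \<le> (\<Sum>i. \<bar>u i\<bar>\<^sup>2) * (\<Sum>i. \<bar>w i\<bar>\<^sup>2)"
    using assms by (intro cs_series) (auto simp: abs_mult l2_real_def)
  then show ?thesis using l2r_ip[OF assms(1)] l2r_ip[OF assms(2)] by (simp add: ip_real_def)
qed

lemma ip_real_sym: "ip_real u w = ip_real w u"
  unfolding ip_real_def by (simp add: mult.commute)

lemma le_suminf_term: "summable f \<Longrightarrow> (\<And>n. 0 \<le> (f n::real)) \<Longrightarrow> f k \<le> suminf f"
  using sum_le_suminf[of f "{k}"] by auto

definition delta :: "nat \<Rightarrow> nat \<Rightarrow> 'a::zero_neq_one" where
  "delta n i = (if i = n then 1 else 0)"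

lemma delta_real_ip: "ip_real (delta n) w = w n"
proof -
  have "(\<lambda>i. delta n i * w i) = (\<lambda>i. if i = n then w i else 0)" by (auto simp: delta_def)
  then show "ip_real (delta n) w = w n" unfolding ip_real_def using sums_single[of n w] sums_unique by metis
qed

lemma delta_real: "delta n \<in> l2_real" "ip_real (delta n) w = w n" "ip_real (delta n) (delta n) = 1"
proof -
  show "ip_real (delta n) w = w n" "ip_real (delta n) (delta n) = 1"
    by (simp_all add: delta_real_ip delta_def)
  have "(\<lambda>i. (delta n i :: real)\<^sup>2) = (\<lambda>i. if i = n then 1 else 0)" by (auto simp: delta_def)
  then show "delta n \<in> l2_real" unfolding l2_real_def using summable_single[of n "\<lambda>_. 1::real"] by simp
qed

definition ushift :: "(nat \<Rightarrow> real) \<Rightarrow> nat \<Rightarrow> nat \<Rightarrow> real" where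
  "ushift f n = (\<lambda>i. if n \<le> i then f (i - n) else 0)"

lemma ushift_l2:
  assumes "f \<in> l2_real"
  shows "ushift f n \<in> l2_real \<and> ip_real (ushift f n) (ushift f n) = ip_real f f"
proof -
  have "(\<lambda>j. (f (n + j - n))\<^sup>2) sums ip_real f f"
    using l2r_ip[OF assms] summable_sums by fastforce
  then have "(\<lambda>i. if n \<le> i then (f (i - n))\<^sup>2 else 0) sums ip_real f f"
    by (rule shift_sums[where g="\<lambda>i. (f (i - n))\<^sup>2"])
  moreover have "(\<lambda>i. (ushift f n i)\<^sup>2) = (\<lambda>i. if n \<le> i then (f (i - n))\<^sup>2 else 0)"
    by (auto simp: ushift_def)
  ultimately have "(\<lambda>i. (ushift f n i)\<^sup>2) sums ip_real f f" by simp
  then show ?thesis unfolding l2_real_def ip_real_def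
    by (auto simp: sums_iff power2_eq_square)
qed

lemma shift_l2: "w \<in> l2_real \<Longrightarrow> (\<lambda>j. w (n + j)) \<in> l2_real"
  unfolding l2_real_def using summable_ignore_initial_segment[of "\<lambda>i. (w i)\<^sup>2" n]
  by (simp add: add.commute)

lemma ushift_ip:
  assumes "f \<in> l2_real" "w \<in> l2_real"
  shows "ip_real f (\<lambda>j. w (n + j)) = ip_real (ushift f n) w"
proof -
  have "(\<lambda>j. f (n + j - n) * w (n + j)) sums ip_real f (\<lambda>j. w (n + j))"
    using l2r_prod[OF assms(1) shift_l2[OF assms(2)]] unfolding ip_real_def
    by (simp add: summable_sums)
  then have "(\<lambda>i. if n \<le> i then f (i - n) * w i else 0) sums ip_real f (\<lambda>j. w (n + j))"
    by (rule shift_sums[where g="\<lambda>i. f (i - n) * w i"])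
  moreover have "(\<lambda>i. ushift f n i * w i) = (\<lambda>i. if n \<le> i then f (i - n) * w i else 0)"
    by (auto simp: ushift_def)
  ultimately show ?thesis unfolding ip_real_def by (simp add: sums_iff)
qed

lemma tilde_ip:
  assumes "f \<in> l2_real" "w \<in> l2_real"
  shows "ip_real f (tilde_real w n) = w n * ip_real f (\<lambda>j. w (n + j))"
proof -
  have s: "summable (\<lambda>j. f j * w (n + j))"
    using l2r_prod[OF assms(1) shift_l2[OF assms(2)]] by simp
  have "ip_real f (tilde_real w n) = (\<Sum>j. w n * (f j * w (n + j)))"
    unfolding ip_real_def tilde_real_def by (simp add: ac_simps)
  also have "\<dots> = w n * ip_real f (\<lambda>j. w (n + j))"
    unfolding ip_real_def using suminf_mult[OF s] by simp
  finally show ?thesis .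
qed

lemma tilde_real_H:
  assumes w: "w \<in> l2_real"
  shows "tilde_real w \<in> Htilde"
proof -
  have sw: "summable (\<lambda>i. (w i)\<^sup>2)" using w l2_real_def by auto
  have ss: "summable (\<lambda>j. (w (n + j))\<^sup>2)" for n
    using shift_l2[OF w, of n] l2_real_def by auto
  have sq: "(\<lambda>j. (tilde_real w n j)\<^sup>2) = (\<lambda>j. (w n)\<^sup>2 * (w (n + j))\<^sup>2)" for n
    by (auto simp: tilde_real_def power_mult_distrib)
  have inl2: "tilde_real w n \<in> l2_real" for n
    unfolding l2_real_def using sq[of n] summable_mult[OF ss[of n]] by simp
  have le: "ip_real (tilde_real w n) (tilde_real w n) \<le> (w n)\<^sup>2 * ip_real w w" for n
  proof -
    have "ip_real (tilde_real w n) (tilde_real w n) = (\<Sum>j. (w n)\<^sup>2 * (w (n + j))\<^sup>2)"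
      using l2r_ip[OF inl2[of n]] sq[of n] by simp
    also have "\<dots> = (w n)\<^sup>2 * (\<Sum>j. (w (n + j))\<^sup>2)" using suminf_mult[OF ss[of n]] by simp
    also have "\<dots> \<le> (w n)\<^sup>2 * ip_real w w"
    proof (rule mult_left_mono)
      have "(\<Sum>i. (w i)\<^sup>2) = (\<Sum>j. (w (j + n))\<^sup>2) + (\<Sum>i<n. (w i)\<^sup>2)"
        using suminf_split_initial_segment[OF sw, of n] by simp
      moreover have "0 \<le> (\<Sum>i<n. (w i)\<^sup>2)" by (intro sum_nonneg) auto
      ultimately show "(\<Sum>j. (w (n + j))\<^sup>2) \<le> ip_real w w"
        using l2r_ip[OF w] by (simp add: add.commute)
    qed simp
    finally show ?thesis .
  qed
  have "summable (\<lambda>n. ip_real (tilde_real w n) (tilde_real w n))"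
    apply (rule summable_comparison_test'[of "\<lambda>n. (w n)\<^sup>2 * ip_real w w"])
    subgoal using summable_mult2[OF sw] by auto
    subgoal for n using le[of n] l2r_ip[OF inl2[of n]] by (simp only: real_norm_def) (metis abs_of_nonneg)
    done
  then show ?thesis unfolding Htilde_def using inl2 by auto
qed

lemma bessel_real_unfold:
  assumes "bessel_seq l2_real ip_real x"
  obtains B where "\<And>k. x k \<in> l2_real"
    "\<And>v. v \<in> l2_real \<Longrightarrow> summable (\<lambda>k. (ip_real v (x k))\<^sup>2) \<and> (\<Sum>k. (ip_real v (x k))\<^sup>2) \<le> B * ip_real v v"
proof -
  from assms obtain B where xl: "\<And>k. x k \<in> l2_real" and b: "\<forall>v\<in>l2_real. summable (\<lambda>k. (norm (ip_real v (x k)))\<^sup>2) \<and>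
                     (\<Sum>k. (norm (ip_real v (x k)))\<^sup>2) \<le> B * norm (ip_real v v)"
    unfolding bessel_seq_def by blast
  show ?thesis
  proof (rule that[OF xl])
    fix v assume v: "v \<in> l2_real"
    have "\<bar>ip_real v v\<bar> = ip_real v v" using l2r_ip[OF v] by simp
    then show "summable (\<lambda>k. (ip_real v (x k))\<^sup>2) \<and> (\<Sum>k. (ip_real v (x k))\<^sup>2) \<le> B * ip_real v v"
      using b[rule_format, OF v] by (simp add: power2_abs)
  qed
qed

lemma norm_bound_real:
  assumes xl: "\<And>k. x k \<in> l2_real"
    and b: "\<And>v. v \<in> l2_real \<Longrightarrow> summable (\<lambda>k. (ip_real v (x k))\<^sup>2) \<and> (\<Sum>k. (ip_real v (x k))\<^sup>2) \<le> B * ip_real v v"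
  shows "ip_real (x k) (x k) \<le> max B 0"
proof -
  let ?N = "ip_real (x k) (x k)"
  have N0: "0 \<le> ?N" using l2r_ip[OF xl] by blast
  have "?N\<^sup>2 \<le> (\<Sum>i. (ip_real (x k) (x i))\<^sup>2)"
    using le_suminf_term[of "\<lambda>i. (ip_real (x k) (x i))\<^sup>2" k] b[OF xl[of k]] by auto
  also have "\<dots> \<le> B * ?N" using b[OF xl[of k]] by blast
  finally have "?N * ?N \<le> B * ?N" by (simp add: power2_eq_square)
  then have "?N \<le> B \<or> ?N = 0" using N0
    by (metis less_eq_real_def mult_le_cancel_right)
  then show ?thesis by auto
qed

lemma real_bessel:
  assumes xl: "\<And>k. x k \<in> l2_real"
    and b: "\<And>v. v \<in> l2_real \<Longrightarrow> summable (\<lambda>k. (ip_real v (x k))\<^sup>2) \<and> (\<Sum>k. (ip_real v (x k))\<^sup>2) \<le> B * ip_real v v"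
  shows "bessel_seq Htilde ip_H (\<lambda>k. tilde_real (x k))"
proof -
  have Nb: "ip_real (x k) (x k) \<le> max B 0" for k by (rule norm_bound_real[OF xl b])
  have main: "summable (\<lambda>k. (ip_H z (tilde_real (x k)))\<^sup>2) \<and>
      (\<Sum>k. (ip_H z (tilde_real (x k)))\<^sup>2) \<le> max B 0 * B * ip_H z z" if z: "z \<in> Htilde" for z
  proof -
    have zn: "z n \<in> l2_real" for n using z Htilde_def by auto
    have sz: "summable (\<lambda>n. ip_real (z n) (z n))" using z Htilde_def by auto
    define c where "c k n = ip_real (ushift (z n) n) (x k)" for k n
    have ul: "ushift (z n) n \<in> l2_real" "ip_real (ushift (z n) n) (ushift (z n) n) = ip_real (z n) (z n)" for n
      using ushift_l2[OF zn] by auto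
    have aeq: "ip_H z (tilde_real (x k)) = (\<Sum>n. x k n * c k n)" for k
      unfolding ip_H_def c_def using tilde_ip[OF zn xl] ushift_ip[OF zn xl] by simp
    have csq: "(c k n)\<^sup>2 \<le> ip_real (z n) (z n) * max B 0" for k n
    proof -
      have "(c k n)\<^sup>2 \<le> ip_real (z n) (z n) * ip_real (x k) (x k)"
        using l2r_prod[OF ul(1) xl, of n k] ul(2)[of n] by (simp add: c_def)
      also have "\<dots> \<le> ip_real (z n) (z n) * max B 0"
        using Nb[of k] l2r_ip[OF zn[of n]] by (intro mult_left_mono) auto
      finally show ?thesis .
    qed
    have rows: "summable (\<lambda>n. (c k n)\<^sup>2)" for k
      apply (rule summable_comparison_test'[OF summable_mult2[OF sz, of "max B 0"]])
      using csq by auto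
    have tk: "(ip_H z (tilde_real (x k)))\<^sup>2 \<le> ip_real (x k) (x k) * (\<Sum>n. (c k n)\<^sup>2)" for k
    proof -
      have "summable (\<lambda>n. x k n * c k n) \<and> (norm (\<Sum>n. x k n * c k n))\<^sup>2 \<le> (\<Sum>n. \<bar>x k n\<bar>\<^sup>2) * (\<Sum>n. \<bar>c k n\<bar>\<^sup>2)"
        apply (rule cs_series) using rows[of k] l2r_ip[OF xl[of k]] by (auto simp: abs_mult)
      then show ?thesis using aeq[of k] l2r_ip[OF xl[of k]] by simp
    qed
    have db: "summable (\<lambda>k. \<Sum>n. (c k n)\<^sup>2) \<and> (\<Sum>k. \<Sum>n. (c k n)\<^sup>2) \<le> (\<Sum>n. B * ip_real (z n) (z n))"
    proof (rule double_bound[OF rows])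
      fix n show "summable (\<lambda>k. (c k n)\<^sup>2) \<and> (\<Sum>k. (c k n)\<^sup>2) \<le> B * ip_real (z n) (z n)"
        using b[OF ul(1)[of n]] ul(2)[of n] by (simp add: c_def)
    next
      show "summable (\<lambda>n. B * ip_real (z n) (z n))" using sz by (rule summable_mult)
    qed
    have cb: "summable (\<lambda>k. (ip_H z (tilde_real (x k)))\<^sup>2) \<and>
       (\<Sum>k. (ip_H z (tilde_real (x k)))\<^sup>2) \<le> max B 0 * (\<Sum>k. \<Sum>n. (c k n)\<^sup>2)"
      apply (rule combine[OF tk])
      using l2r_ip[OF xl] Nb db rows by (auto intro!: suminf_nonneg)
    have "max B 0 * (\<Sum>k. \<Sum>n. (c k n)\<^sup>2) \<le> max B 0 * (\<Sum>n. B * ip_real (z n) (z n))"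
      using db by (intro mult_left_mono) auto
    also have "\<dots> = max B 0 * B * ip_H z z"
      unfolding ip_H_def using suminf_mult[OF sz, of B] by simp
    finally show ?thesis using cb by linarith
  qed
  have Hnn: "0 \<le> ip_H z z" if "z \<in> Htilde" for z
    unfolding ip_H_def using that Htilde_def l2r_ip by (auto intro!: suminf_nonneg)
  show ?thesis unfolding bessel_seq_def
  proof (intro conjI)
    show "\<forall>k. tilde_real (x k) \<in> Htilde" using tilde_real_H[OF xl] by blast
    show "\<exists>B'::real. \<forall>z\<in>Htilde. summable (\<lambda>k. (norm (ip_H z (tilde_real (x k))))\<^sup>2) \<and>
         (\<Sum>k. (norm (ip_H z (tilde_real (x k))))\<^sup>2) \<le> B' * norm (ip_H z z)"
    proof (rule exI[of _ "max B 0 * B"], rule ballI)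
      fix z assume z: "z \<in> Htilde"
      have "\<bar>ip_H z z\<bar> = ip_H z z" using Hnn[OF z] by simp
      then show "summable (\<lambda>k. (norm (ip_H z (tilde_real (x k))))\<^sup>2) \<and>
         (\<Sum>k. (norm (ip_H z (tilde_real (x k))))\<^sup>2) \<le> (max B 0 * B) * norm (ip_H z z)"
        using main[OF z] by (simp add: power2_abs)
    qed
  qed
qed

lemma ip_real_zero[simp]: "ip_real (\<lambda>_. 0) w = 0" "ip_real w (\<lambda>_. 0) = 0"
  by (simp_all add: ip_real_def)

definition ez :: "nat \<Rightarrow> nat \<Rightarrow> nat \<Rightarrow> real" where
  "ez j = (\<lambda>n. if n = 0 then delta j else (\<lambda>_. 0))"

lemma ez_ip: "ip_H (ez j) w = w 0 j"
proof -
  have "(\<lambda>n. ip_real (ez j n) (w n)) = (\<lambda>n. if n = 0 then w n j else 0)"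
    by (rule ext) (simp add: ez_def delta_real_ip)
  then show ?thesis unfolding ip_H_def using sums_single[of 0 "\<lambda>n. w n j"] sums_unique by metis
qed

lemma ez_H: "ez j \<in> Htilde"
proof -
  have "ez j n \<in> l2_real" for n
    using delta_real(1)[of j] by (cases "n = 0") (auto simp: ez_def l2_real_def)
  moreover have "(\<lambda>n. ip_real (ez j n) (ez j n)) = (\<lambda>n. if n = 0 then 1 else 0)"
    by (rule ext) (simp add: ez_def delta_real delta_def)
  ultimately show ?thesis unfolding Htilde_def using summable_single[of 0 "\<lambda>_. 1::real"] by simp
qed

lemma ez_00: "ez j 0 j = 1"
  by (simp add: ez_def delta_def)

lemma ez_self: "ip_H (ez j) (ez j) = 1"
  unfolding ez_ip by (rule ez_00)

lemma real_part:
  fixes x :: "nat \<Rightarrow> nat \<Rightarrow> real"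
  assumes "bessel_seq l2_real ip_real x"
  shows "bessel_seq Htilde ip_H (\<lambda>k. tilde_real (x k)) \<and> \<not> frame_seq Htilde ip_H (\<lambda>k. tilde_real (x k))"
proof -
  obtain B where xl: "\<And>k. x k \<in> l2_real"
    and b: "\<And>v. v \<in> l2_real \<Longrightarrow> summable (\<lambda>k. (ip_real v (x k))\<^sup>2) \<and> (\<Sum>k. (ip_real v (x k))\<^sup>2) \<le> B * ip_real v v"
    using bessel_real_unfold[OF assms] by metis
  have bes: "bessel_seq Htilde ip_H (\<lambda>k. tilde_real (x k))" by (rule real_bessel[OF xl b])
  have "\<not> frame_seq Htilde ip_H (\<lambda>k. tilde_real (x k))"
  proof
    assume "frame_seq Htilde ip_H (\<lambda>k. tilde_real (x k))"
    then obtain A where A0: "A > 0" and Al: "\<forall>v\<in>Htilde. A * norm (ip_H v v) \<le> (\<Sum>k. (norm (ip_H v (tilde_real (x k))))\<^sup>2)"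
      unfolding frame_seq_def by blast
    from bes obtain B' where b': "\<forall>v\<in>Htilde. summable (\<lambda>k. (norm (ip_H v (tilde_real (x k))))\<^sup>2)"
      unfolding bessel_seq_def by blast
    show False
    proof (rule nonframe[where T="\<lambda>k j. x k 0 * x k j" and p="\<lambda>k. (x k 0)\<^sup>2"
          and h="\<lambda>k j. (x k j)\<^sup>2" and C="max B 0" and A=A])
      show "(x k 0 * x k j)\<^sup>2 \<le> (x k 0)\<^sup>2 * (x k j)\<^sup>2" for k j by (simp add: power_mult_distrib)
      show "summable (\<lambda>k. (x k 0)\<^sup>2)" using b[OF delta_real(1)[of 0]] by (simp add: delta_real_ip)
      show "(\<Sum>j<J. (x k j)\<^sup>2) \<le> max B 0" for k J
        using sum_le_suminf[of "\<lambda>j. (x k j)\<^sup>2" "{..<J}"] l2r_ip[OF xl[of k]] norm_bound_real[OF xl b, of k]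
        by auto
      show "summable (\<lambda>k. (x k 0 * x k j)\<^sup>2)" for j
        using b'[rule_format, OF ez_H[of j]] by (simp add: ez_ip tilde_real_def power2_abs)
      show "A \<le> (\<Sum>k. (x k 0 * x k j)\<^sup>2)" for j
        using Al[rule_format, OF ez_H[of j]] by (simp add: ez_ip ez_00 tilde_real_def power2_abs)
    qed (use A0 in auto)
  qed
  with bes show ?thesis by blast
qed

definition nc :: "(nat \<Rightarrow> complex) \<Rightarrow> real" where
  "nc v = (\<Sum>i. (norm (v i))\<^sup>2)"

lemma nc_nonneg: "v \<in> l2_cplx \<Longrightarrow> 0 \<le> nc v"
  unfolding nc_def l2_cplx_def by (auto intro!: suminf_nonneg)

lemma l2c_ip: assumes "v \<in> l2_cplx" shows "ip_cplx v v = of_real (nc v)" "norm (ip_cplx v v) = nc v"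
proof -
  have s: "summable (\<lambda>i. (norm (v i))\<^sup>2)" using assms l2_cplx_def by auto
  have e: "v i * cnj (v i) = of_real ((norm (v i))\<^sup>2)" for i using complex_norm_square by metis
  have "ip_cplx v v = (\<Sum>i. of_real ((norm (v i))\<^sup>2))"
    unfolding ip_cplx_def by (simp only: e)
  also have "\<dots> = of_real (nc v)" unfolding nc_def
    by (rule suminf_of_real[OF s, symmetric])
  finally show "ip_cplx v v = of_real (nc v)" .
  then show "norm (ip_cplx v v) = nc v" using nc_nonneg[OF assms] by simp
qed

lemma l2c_prod:
  assumes "u \<in> l2_cplx" "w \<in> l2_cplx"
  shows "summable (\<lambda>i. u i * cnj (w i)) \<and> (norm (ip_cplx u w))\<^sup>2 \<le> nc u * nc w"
proof -
  have "summable (\<lambda>i. u i * cnj (w i)) \<and> (norm (\<Sum>i. u i * cnj (w i)))\<^sup>2 \<le> (\<Sum>i. (norm (u i))\<^sup>2) * (\<Sum>i. (norm (w i))\<^sup>2)"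
    using assms by (intro cs_series) (auto simp: norm_mult l2_cplx_def)
  then show ?thesis by (simp add: ip_cplx_def nc_def)
qed

lemma ip_cplx_sym:
  assumes "u \<in> l2_cplx" "w \<in> l2_cplx"
  shows "ip_cplx w u = cnj (ip_cplx u w)"
proof -
  have "(\<lambda>i. u i * cnj (w i)) sums ip_cplx u w"
    using l2c_prod[OF assms] unfolding ip_cplx_def by (simp add: summable_sums)
  then have "(\<lambda>i. cnj (u i * cnj (w i))) sums cnj (ip_cplx u w)" by (simp only: sums_cnj)
  then show ?thesis unfolding ip_cplx_def by (simp add: sums_iff mult.commute)
qed

lemma delta_cplx: "delta n \<in> l2_cplx" "ip_cplx (delta n) w = cnj (w n)" "nc (delta n) = 1"
proof -
  have e: "(\<lambda>i. (norm (delta n i :: complex))\<^sup>2) = (\<lambda>i. if i = n then 1 else 0)" by (auto simp: delta_def)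
  then show "delta n \<in> l2_cplx" unfolding l2_cplx_def using summable_single[of n "\<lambda>_. 1::real"] by simp
  show "nc (delta n) = 1" unfolding nc_def e using sums_single[of n "\<lambda>_. 1::real"] sums_unique by fastforce
  have "(\<lambda>i. delta n i * cnj (w i)) = (\<lambda>i. if i = n then cnj (w i) else 0)" by (auto simp: delta_def)
  then show "ip_cplx (delta n) w = cnj (w n)" unfolding ip_cplx_def
    using sums_single[of n "\<lambda>i. cnj (w i)"] sums_unique by metis
qed

lemma bessel_cplx_unfold:
  assumes "bessel_seq l2_cplx ip_cplx x"
  obtains B where "\<And>k. x k \<in> l2_cplx"
    "\<And>v. v \<in> l2_cplx \<Longrightarrow> summable (\<lambda>k. (norm (ip_cplx v (x k)))\<^sup>2) \<and> (\<Sum>k. (norm (ip_cplx v (x k)))\<^sup>2) \<le> B * nc v"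
proof -
  from assms obtain B where xl: "\<And>k. x k \<in> l2_cplx" and b: "\<forall>v\<in>l2_cplx. summable (\<lambda>k. (norm (ip_cplx v (x k)))\<^sup>2) \<and>
                     (\<Sum>k. (norm (ip_cplx v (x k)))\<^sup>2) \<le> B * norm (ip_cplx v v)"
    unfolding bessel_seq_def by blast
  show ?thesis
  proof (rule that[OF xl])
    fix v assume v: "v \<in> l2_cplx"
    show "summable (\<lambda>k. (norm (ip_cplx v (x k)))\<^sup>2) \<and> (\<Sum>k. (norm (ip_cplx v (x k)))\<^sup>2) \<le> B * nc v"
      using b[rule_format, OF v] l2c_ip(2)[OF v] by simp
  qed
qed

lemma norm_bound_cplx:
  assumes xl: "\<And>k. x k \<in> l2_cplx"
    and b: "\<And>v. v \<in> l2_cplx \<Longrightarrow> summable (\<lambda>k. (norm (ip_cplx v (x k)))\<^sup>2) \<and> (\<Sum>k. (norm (ip_cplx v (x k)))\<^sup>2) \<le> B * nc v"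
  shows "nc (x k) \<le> max B 0"
proof -
  let ?N = "nc (x k)"
  have N0: "0 \<le> ?N" using nc_nonneg[OF xl] by blast
  have "?N\<^sup>2 = (norm (ip_cplx (x k) (x k)))\<^sup>2" using l2c_ip(2)[OF xl[of k]] by simp
  also have "\<dots> \<le> (\<Sum>i. (norm (ip_cplx (x k) (x i)))\<^sup>2)"
    using le_suminf_term[of "\<lambda>i. (norm (ip_cplx (x k) (x i)))\<^sup>2" k] b[OF xl[of k]] by auto
  also have "\<dots> \<le> B * ?N" using b[OF xl[of k]] by blast
  finally have "?N * ?N \<le> B * ?N" by (simp add: power2_eq_square)
  then have "?N \<le> B \<or> ?N = 0" using N0
    by (metis less_eq_real_def mult_le_cancel_right)
  then show ?thesis by auto
qed

lemma group_sums:
  fixes F G :: "nat \<Rightarrow> real"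
  assumes F: "F sums S" and G0: "G 0 = F 0" and GS: "\<And>m. G (Suc m) = F (2 * m + 1) + F (2 * m + 2)"
  shows "G sums S"
proof -
  have "(\<lambda>j. F (Suc j)) sums (S - F 0)" using F sums_Suc_iff[of F "S - F 0"] by simp
  from sums_group[OF this, of 2]
  have "(\<lambda>m. \<Sum>j\<in>{m * 2..<m * 2 + 2}. F (Suc j)) sums (S - F 0)" by simp
  moreover have "(\<Sum>j\<in>{m * 2..<m * 2 + 2}. F (Suc j)) = G (Suc m)" for m
  proof -
    have "{m * 2..<m * 2 + 2} = {2 * m, 2 * m + 1}" by auto
    then show ?thesis by (simp add: GS)
  qed
  ultimately have "(\<lambda>m. G (Suc m)) sums (S - F 0)" by simp
  then show ?thesis using sums_Suc_iff[of G "S - F 0"] G0 by simp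
qed

lemma half_sum_bound:
  fixes g :: "nat \<Rightarrow> real"
  assumes g0: "\<And>i. 0 \<le> g i" and sg: "summable g"
  shows "(\<Sum>j<J. g ((j + 1) div 2)) \<le> 2 * (\<Sum>i. g i)"
proof -
  have ind: "(\<Sum>j<2 * M. g ((j + 1) div 2)) + g M \<le> 2 * (\<Sum>m<M + 1. g m)" for M
  proof (induction M)
    case 0 then show ?case using g0[of 0] by simp
  next
    case (Suc M)
    have e: "{..<2 * Suc M} = insert (Suc (2 * M)) (insert (2 * M) {..<2 * M})" by auto
    have "(\<Sum>j<2 * Suc M. g ((j + 1) div 2)) = g (Suc M) + g M + (\<Sum>j<2 * M. g ((j + 1) div 2))"
      unfolding e by simp
    then show ?case using Suc g0[of M] g0[of "Suc M"] by simp
  qed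
  have "(\<Sum>j<J. g ((j + 1) div 2)) \<le> (\<Sum>j<2 * J. g ((j + 1) div 2))"
    by (rule sum_mono2) (use g0 in auto)
  also have "\<dots> \<le> 2 * (\<Sum>m<J + 1. g m)" using ind[of J] g0[of J] by linarith
  also have "\<dots> \<le> 2 * (\<Sum>i. g i)" using sum_le_suminf[OF sg, of "{..<J+1}"] g0 by simp
  finally show ?thesis .
qed

lemma tilde_sq: "(tilde_cplx w n j)\<^sup>2 \<le> (norm (w n))\<^sup>2 * (norm (w (n + (j + 1) div 2)))\<^sup>2"
proof (cases "j = 0")
  case True then show ?thesis by (simp add: tilde_cplx_def power2_eq_square)
next
  case False
  let ?q = "cnj (w n) * w (n + (j + 1) div 2)"
  have nq: "(norm ?q)\<^sup>2 = (norm (w n))\<^sup>2 * (norm (w (n + (j + 1) div 2)))\<^sup>2"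
    by (simp add: norm_mult power_mult_distrib)
  show ?thesis
  proof (cases "odd j")
    case True
    have "(tilde_cplx w n j)\<^sup>2 = (Re ?q)\<^sup>2" using False True by (simp add: tilde_cplx_def)
    also have "\<dots> \<le> (norm ?q)\<^sup>2" using abs_Re_le_cmod[of ?q]
      by (metis abs_ge_zero power2_abs power_mono)
    finally show ?thesis using nq by simp
  next
    case ev: False
    then have jd: "j div 2 = (j + 1) div 2" by presburger
    have "(tilde_cplx w n j)\<^sup>2 = (Im ?q)\<^sup>2" using False ev jd by (simp add: tilde_cplx_def)
    also have "\<dots> \<le> (norm ?q)\<^sup>2" using abs_Im_le_cmod[of ?q]
      by (metis abs_ge_zero power2_abs power_mono)
    finally show ?thesis using nq by simp
  qed
qed

lemma shiftc_l2:
  assumes w: "w \<in> l2_cplx"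
  shows "(\<lambda>i. w (n + i)) \<in> l2_cplx \<and> nc (\<lambda>i. w (n + i)) \<le> nc w"
proof -
  have sw: "summable (\<lambda>i. (norm (w i))\<^sup>2)" using w l2_cplx_def by auto
  have s: "summable (\<lambda>i. (norm (w (i + n)))\<^sup>2)" using summable_ignore_initial_segment[OF sw, of n] .
  have "(\<Sum>i. (norm (w i))\<^sup>2) = (\<Sum>i. (norm (w (i + n)))\<^sup>2) + (\<Sum>i<n. (norm (w i))\<^sup>2)"
    using suminf_split_initial_segment[OF sw, of n] by simp
  moreover have "0 \<le> (\<Sum>i<n. (norm (w i))\<^sup>2)" by (intro sum_nonneg) auto
  ultimately show ?thesis using s unfolding l2_cplx_def nc_def by (simp add: add.commute)
qed

lemma tilde_cplx_l2:
  assumes w: "w \<in> l2_cplx"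
  shows "tilde_cplx w n \<in> l2_real \<and> ip_real (tilde_cplx w n) (tilde_cplx w n) \<le> (norm (w n))\<^sup>2 * (2 * nc w)"
proof -
  define g where "g i = (norm (w (n + i)))\<^sup>2" for i
  have sg: "summable g" and gb: "(\<Sum>i. g i) \<le> nc w"
    using shiftc_l2[OF w, of n] unfolding g_def l2_cplx_def nc_def by auto
  have g0: "0 \<le> g i" for i by (simp add: g_def)
  have hb: "(\<Sum>j<J. g ((j + 1) div 2)) \<le> 2 * nc w" for J
    using half_sum_bound[OF g0 sg, of J] gb by linarith
  have sh: "summable (\<lambda>j. g ((j + 1) div 2))"
    by (rule summableI_nonneg_bounded[OF _ hb]) (simp add: g0)
  have shs: "(\<Sum>j. g ((j + 1) div 2)) \<le> 2 * nc w" by (rule suminf_le_const[OF sh hb])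
  have le: "(tilde_cplx w n j)\<^sup>2 \<le> (norm (w n))\<^sup>2 * g ((j + 1) div 2)" for j
    using tilde_sq[of w n j] by (simp add: g_def)
  have sm: "summable (\<lambda>j. (norm (w n))\<^sup>2 * g ((j + 1) div 2))" by (rule summable_mult[OF sh])
  have st: "summable (\<lambda>j. (tilde_cplx w n j)\<^sup>2)"
    by (rule summable_comparison_test'[OF sm]) (use le in auto)
  have inl: "tilde_cplx w n \<in> l2_real" using st l2_real_def by auto
  have "ip_real (tilde_cplx w n) (tilde_cplx w n) = (\<Sum>j. (tilde_cplx w n j)\<^sup>2)"
    using l2r_ip[OF inl] by simp
  also have "\<dots> \<le> (\<Sum>j. (norm (w n))\<^sup>2 * g ((j + 1) div 2))" by (rule suminf_le[OF le st sm])
  also have "\<dots> = (norm (w n))\<^sup>2 * (\<Sum>j. g ((j + 1) div 2))" by (rule suminf_mult[OF sh])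
  also have "\<dots> \<le> (norm (w n))\<^sup>2 * (2 * nc w)" by (rule mult_left_mono[OF shs]) simp
  finally show ?thesis using inl by blast
qed

lemma tilde_cplx_H:
  assumes w: "w \<in> l2_cplx"
  shows "tilde_cplx w \<in> Htilde"
proof -
  have sw: "summable (\<lambda>i. (norm (w i))\<^sup>2)" using w l2_cplx_def by auto
  have "summable (\<lambda>n. ip_real (tilde_cplx w n) (tilde_cplx w n))"
    apply (rule summable_comparison_test'[of "\<lambda>n. (norm (w n))\<^sup>2 * (2 * nc w)"])
    subgoal using summable_mult2[OF sw] by auto
    subgoal for n using tilde_cplx_l2[OF w, of n] l2r_ip[of "tilde_cplx w n"]
      by (simp only: real_norm_def) (metis abs_of_nonneg)
    done
  then show ?thesis unfolding Htilde_def using tilde_cplx_l2[OF w] by auto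
qed

definition Wz :: "(nat \<Rightarrow> real) \<Rightarrow> nat \<Rightarrow> complex" where
  "Wz f m = (if m = 0 then of_real (f 0) else Complex (f (2 * m - 1)) (- f (2 * m)))"

definition vz :: "(nat \<Rightarrow> real) \<Rightarrow> nat \<Rightarrow> nat \<Rightarrow> complex" where
  "vz f n = (\<lambda>i. if n \<le> i then cnj (Wz f (i - n)) else 0)"

lemma Wz_sums:
  assumes f: "f \<in> l2_real"
  shows "(\<lambda>m. (norm (Wz f m))\<^sup>2) sums ip_real f f"
proof (rule group_sums[where F="\<lambda>j. (f j)\<^sup>2"])
  show "(\<lambda>j. (f j)\<^sup>2) sums ip_real f f" using l2r_ip[OF f] summable_sums by fastforce
  show "(norm (Wz f 0))\<^sup>2 = (f 0)\<^sup>2" by (simp add: Wz_def)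
  fix m
  have "2 * Suc m - 1 = 2 * m + 1" "2 * Suc m = 2 * m + 2" by simp_all
  then show "(norm (Wz f (Suc m)))\<^sup>2 = (f (2 * m + 1))\<^sup>2 + (f (2 * m + 2))\<^sup>2"
    unfolding Wz_def by (simp add: cmod_power2 del: mult_Suc_right)
qed

lemma vz_l2:
  assumes f: "f \<in> l2_real"
  shows "vz f n \<in> l2_cplx \<and> nc (vz f n) = ip_real f f"
proof -
  have "(\<lambda>j. (norm (Wz f (n + j - n)))\<^sup>2) sums ip_real f f" using Wz_sums[OF f] by simp
  then have "(\<lambda>i. if n \<le> i then (norm (Wz f (i - n)))\<^sup>2 else 0) sums ip_real f f"
    by (rule shift_sums[where g="\<lambda>i. (norm (Wz f (i - n)))\<^sup>2"])
  moreover have "(\<lambda>i. (norm (vz f n i))\<^sup>2) = (\<lambda>i. if n \<le> i then (norm (Wz f (i - n)))\<^sup>2 else 0)"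
    by (auto simp: vz_def)
  ultimately have "(\<lambda>i. (norm (vz f n i))\<^sup>2) sums ip_real f f" by simp
  then show ?thesis unfolding l2_cplx_def nc_def by (auto simp: sums_iff)
qed

lemma vz_ip:
  assumes f: "f \<in> l2_real" and w: "w \<in> l2_cplx"
  shows "ip_real f (tilde_cplx w n) = Re (cnj (w n) * ip_cplx w (vz f n))"
proof -
  have sW: "summable (\<lambda>m. (norm (Wz f m))\<^sup>2)" using Wz_sums[OF f] sums_summable by blast
  have sw: "summable (\<lambda>m. (norm (w (n + m)))\<^sup>2)" using shiftc_l2[OF w, of n] l2_cplx_def by auto
  have "summable (\<lambda>m. w (n + m) * Wz f m)"
    using cs_series[of "\<lambda>m. w (n + m) * Wz f m" "\<lambda>m. norm (w (n + m))" "\<lambda>m. norm (Wz f m)"] sW sw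
    by (simp add: norm_mult)
  then have S: "(\<lambda>m. w (n + m) * Wz f m) sums (\<Sum>m. w (n + m) * Wz f m)" by (rule summable_sums)
  define S' where "S' = (\<Sum>m. w (n + m) * Wz f m)"
  have "(\<lambda>m. w (n + m) * Wz f (n + m - n)) sums S'" using S S'_def by simp
  then have "(\<lambda>i. if n \<le> i then w i * Wz f (i - n) else 0) sums S'"
    by (rule shift_sums[where g="\<lambda>i. w i * Wz f (i - n)"])
  moreover have "(\<lambda>i. w i * cnj (vz f n i)) = (\<lambda>i. if n \<le> i then w i * Wz f (i - n) else 0)"
    by (auto simp: vz_def)
  ultimately have ipS: "ip_cplx w (vz f n) = S'" unfolding ip_cplx_def by (simp add: sums_iff)
  have Gs: "(\<lambda>m. Re (cnj (w n) * (w (n + m) * Wz f m))) sums Re (cnj (w n) * S')"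
    using bounded_linear.sums[OF bounded_linear_Re sums_mult[OF S[folded S'_def], of "cnj (w n)"]] .
  have Fs: "(\<lambda>j. f j * tilde_cplx w n j) sums ip_real f (tilde_cplx w n)"
    using l2r_prod[OF f conjunct1[OF tilde_cplx_l2[OF w, of n]]] unfolding ip_real_def
    by (simp add: summable_sums)
  have "(\<lambda>m. Re (cnj (w n) * (w (n + m) * Wz f m))) sums ip_real f (tilde_cplx w n)"
  proof (rule group_sums[OF Fs])
    have h: "cmod (w n) * cmod (w n) = Re (w n) * Re (w n) + Im (w n) * Im (w n)"
      using cmod_power2[of "w n"] by (simp add: power2_eq_square)
    show "Re (cnj (w n) * (w (n + 0) * Wz f 0)) = f 0 * tilde_cplx w n 0"
      by (simp add: Wz_def tilde_cplx_def h algebra_simps power2_eq_square)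
    fix m
    have a: "2 * Suc m - 1 = 2 * m + 1" "2 * Suc m = 2 * m + 2" by simp_all
    have b: "(2 * m + 1 + 1) div 2 = Suc m" "(2 * m + 2) div 2 = Suc m" by simp_all
    have c: "odd (2 * m + 1)" "\<not> odd (2 * m + 2)" by simp_all
    show "Re (cnj (w n) * (w (n + Suc m) * Wz f (Suc m))) =
        f (2 * m + 1) * tilde_cplx w n (2 * m + 1) + f (2 * m + 2) * tilde_cplx w n (2 * m + 2)"
      unfolding Wz_def tilde_cplx_def using a b c
      by (simp del: mult_Suc_right add: algebra_simps)
  qed
  then show ?thesis using Gs ipS sums_unique2 by blast
qed

lemma cplx_bessel:
  assumes xl: "\<And>k. x k \<in> l2_cplx"
    and b: "\<And>v. v \<in> l2_cplx \<Longrightarrow> summable (\<lambda>k. (norm (ip_cplx v (x k)))\<^sup>2) \<and> (\<Sum>k. (norm (ip_cplx v (x k)))\<^sup>2) \<le> B * nc v"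
  shows "bessel_seq Htilde ip_H (\<lambda>k. tilde_cplx (x k))"
proof -
  have Nb: "nc (x k) \<le> max B 0" for k by (rule norm_bound_cplx[OF xl b])
  have main: "summable (\<lambda>k. (ip_H z (tilde_cplx (x k)))\<^sup>2) \<and>
      (\<Sum>k. (ip_H z (tilde_cplx (x k)))\<^sup>2) \<le> max B 0 * B * ip_H z z" if z: "z \<in> Htilde" for z
  proof -
    have zn: "z n \<in> l2_real" for n using z Htilde_def by auto
    have sz: "summable (\<lambda>n. ip_real (z n) (z n))" using z Htilde_def by auto
    define c where "c k n = norm (ip_cplx (x k) (vz (z n) n))" for k n
    have ul: "vz (z n) n \<in> l2_cplx" "nc (vz (z n) n) = ip_real (z n) (z n)" for n
      using vz_l2[OF zn] by auto
    have aeq: "ip_H z (tilde_cplx (x k)) = (\<Sum>n. Re (cnj (x k n) * ip_cplx (x k) (vz (z n) n)))" for k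
      unfolding ip_H_def using vz_ip[OF zn xl] by simp
    have csq: "(c k n)\<^sup>2 \<le> ip_real (z n) (z n) * max B 0" for k n
    proof -
      have "(c k n)\<^sup>2 \<le> nc (x k) * ip_real (z n) (z n)"
        using l2c_prod[OF xl ul(1), of k n] ul(2)[of n] by (simp add: c_def)
      also have "\<dots> \<le> max B 0 * ip_real (z n) (z n)"
        using Nb[of k] l2r_ip[OF zn[of n]] by (intro mult_right_mono) auto
      finally show ?thesis by (simp add: mult.commute)
    qed
    have rows: "summable (\<lambda>n. (c k n)\<^sup>2)" for k
      apply (rule summable_comparison_test'[OF summable_mult2[OF sz, of "max B 0"]])
      using csq by auto
    have tk: "(ip_H z (tilde_cplx (x k)))\<^sup>2 \<le> nc (x k) * (\<Sum>n. (c k n)\<^sup>2)" for k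
    proof -
      have "summable (\<lambda>n. Re (cnj (x k n) * ip_cplx (x k) (vz (z n) n))) \<and>
         (norm (\<Sum>n. Re (cnj (x k n) * ip_cplx (x k) (vz (z n) n))))\<^sup>2 \<le> (\<Sum>n. (norm (x k n))\<^sup>2) * (\<Sum>n. (c k n)\<^sup>2)"
      proof (rule cs_series)
        fix n
        show "norm (Re (cnj (x k n) * ip_cplx (x k) (vz (z n) n))) \<le> norm (x k n) * c k n"
          using abs_Re_le_cmod[of "cnj (x k n) * ip_cplx (x k) (vz (z n) n)"]
          by (simp add: c_def norm_mult)
      qed (use rows[of k] xl[of k] in \<open>auto simp: c_def l2_cplx_def\<close>)
      then show ?thesis using aeq[of k] by (simp add: nc_def)
    qed
    have db: "summable (\<lambda>k. \<Sum>n. (c k n)\<^sup>2) \<and> (\<Sum>k. \<Sum>n. (c k n)\<^sup>2) \<le> (\<Sum>n. B * ip_real (z n) (z n))"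
    proof (rule double_bound[OF rows])
      fix n
      have "c k n = norm (ip_cplx (vz (z n) n) (x k))" for k
        unfolding c_def using ip_cplx_sym[OF xl[of k] ul(1)[of n]] by simp
      then show "summable (\<lambda>k. (c k n)\<^sup>2) \<and> (\<Sum>k. (c k n)\<^sup>2) \<le> B * ip_real (z n) (z n)"
        using b[OF ul(1)[of n]] ul(2)[of n] by simp
    next
      show "summable (\<lambda>n. B * ip_real (z n) (z n))" using sz by (rule summable_mult)
    qed
    have cb: "summable (\<lambda>k. (ip_H z (tilde_cplx (x k)))\<^sup>2) \<and>
       (\<Sum>k. (ip_H z (tilde_cplx (x k)))\<^sup>2) \<le> max B 0 * (\<Sum>k. \<Sum>n. (c k n)\<^sup>2)"
      apply (rule combine[OF tk])
      using nc_nonneg[OF xl] Nb db rows by (auto intro!: suminf_nonneg)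
    have "max B 0 * (\<Sum>k. \<Sum>n. (c k n)\<^sup>2) \<le> max B 0 * (\<Sum>n. B * ip_real (z n) (z n))"
      using db by (intro mult_left_mono) auto
    also have "\<dots> = max B 0 * B * ip_H z z"
      unfolding ip_H_def using suminf_mult[OF sz, of B] by simp
    finally show ?thesis using cb by linarith
  qed
  have Hnn: "0 \<le> ip_H z z" if "z \<in> Htilde" for z
    unfolding ip_H_def using that Htilde_def l2r_ip by (auto intro!: suminf_nonneg)
  show ?thesis unfolding bessel_seq_def
  proof (intro conjI)
    show "\<forall>k. tilde_cplx (x k) \<in> Htilde" using tilde_cplx_H[OF xl] by blast
    show "\<exists>B'::real. \<forall>z\<in>Htilde. summable (\<lambda>k. (norm (ip_H z (tilde_cplx (x k))))\<^sup>2) \<and>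
         (\<Sum>k. (norm (ip_H z (tilde_cplx (x k))))\<^sup>2) \<le> B' * norm (ip_H z z)"
    proof (rule exI[of _ "max B 0 * B"], rule ballI)
      fix z assume z: "z \<in> Htilde"
      have "\<bar>ip_H z z\<bar> = ip_H z z" using Hnn[OF z] by simp
      then show "summable (\<lambda>k. (norm (ip_H z (tilde_cplx (x k))))\<^sup>2) \<and>
         (\<Sum>k. (norm (ip_H z (tilde_cplx (x k))))\<^sup>2) \<le> (max B 0 * B) * norm (ip_H z z)"
        using main[OF z] by (simp add: power2_abs)
    qed
  qed
qed

lemma cplx_part:
  fixes x :: "nat \<Rightarrow> nat \<Rightarrow> complex"
  assumes "bessel_seq l2_cplx ip_cplx x"
  shows "bessel_seq Htilde ip_H (\<lambda>k. tilde_cplx (x k)) \<and> \<not> frame_seq Htilde ip_H (\<lambda>k. tilde_cplx (x k))"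
proof -
  obtain B where xl: "\<And>k. x k \<in> l2_cplx"
    and b: "\<And>v. v \<in> l2_cplx \<Longrightarrow> summable (\<lambda>k. (norm (ip_cplx v (x k)))\<^sup>2) \<and> (\<Sum>k. (norm (ip_cplx v (x k)))\<^sup>2) \<le> B * nc v"
    using bessel_cplx_unfold[OF assms] by metis
  have bes: "bessel_seq Htilde ip_H (\<lambda>k. tilde_cplx (x k))" by (rule cplx_bessel[OF xl b])
  have "\<not> frame_seq Htilde ip_H (\<lambda>k. tilde_cplx (x k))"
  proof
    assume "frame_seq Htilde ip_H (\<lambda>k. tilde_cplx (x k))"
    then obtain A where A0: "A > 0" and Al: "\<forall>v\<in>Htilde. A * norm (ip_H v v) \<le> (\<Sum>k. (norm (ip_H v (tilde_cplx (x k))))\<^sup>2)"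
      unfolding frame_seq_def by blast
    from bes obtain B' where b': "\<forall>v\<in>Htilde. summable (\<lambda>k. (norm (ip_H v (tilde_cplx (x k))))\<^sup>2)"
      unfolding bessel_seq_def by blast
    show False
    proof (rule nonframe[where T="\<lambda>k j. tilde_cplx (x k) 0 j" and p="\<lambda>k. (norm (x k 0))\<^sup>2"
          and h="\<lambda>k j. (norm (x k ((j + 1) div 2)))\<^sup>2" and C="2 * max B 0" and A=A])
      show "(tilde_cplx (x k) 0 j)\<^sup>2 \<le> (norm (x k 0))\<^sup>2 * (norm (x k ((j + 1) div 2)))\<^sup>2" for k j
        using tilde_sq[of "x k" 0 j] by simp
      show "summable (\<lambda>k. (norm (x k 0))\<^sup>2)" using b[OF delta_cplx(1)[of 0]] by (simp add: delta_cplx)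
      show "(\<Sum>j<J. (norm (x k ((j + 1) div 2)))\<^sup>2) \<le> 2 * max B 0" for k J
      proof -
        have sw: "summable (\<lambda>i. (norm (x k i))\<^sup>2)" using xl[of k] l2_cplx_def by auto
        have "(\<Sum>j<J. (norm (x k ((j + 1) div 2)))\<^sup>2) \<le> 2 * (\<Sum>i. (norm (x k i))\<^sup>2)"
          by (rule half_sum_bound[OF _ sw]) simp
        then show ?thesis using norm_bound_cplx[OF xl b, of k] by (simp add: nc_def)
      qed
      show "summable (\<lambda>k. (tilde_cplx (x k) 0 j)\<^sup>2)" for j
        using b'[rule_format, OF ez_H[of j]] by (simp add: ez_ip power2_abs)
      show "A \<le> (\<Sum>k. (tilde_cplx (x k) 0 j)\<^sup>2)" for j
        using Al[rule_format, OF ez_H[of j]] by (simp add: ez_ip ez_00 power2_abs)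
    qed (use A0 in auto)
  qed
  with bes show ?thesis by blast
qed

theorem mainTheorem13:
  shows "(\<forall>x :: nat \<Rightarrow> nat \<Rightarrow> real. bessel_seq l2_real ip_real x \<longrightarrow>
            bessel_seq Htilde ip_H (\<lambda>k. tilde_real (x k)) \<and>
            \<not> frame_seq Htilde ip_H (\<lambda>k. tilde_real (x k))) \<and>
         (\<forall>x :: nat \<Rightarrow> nat \<Rightarrow> complex. bessel_seq l2_cplx ip_cplx x \<longrightarrow>
            bessel_seq Htilde ip_H (\<lambda>k. tilde_cplx (x k)) \<and>
            \<not> frame_seq Htilde ip_H (\<lambda>k. tilde_cplx (x k)))"
  using real_part cplx_part by blast

end
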